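(* Let $p\in\mathbb{N}$ and let $B_w$ be the weighted backward shift on $\ell^2$ with weights $w_k=\left(\frac{k+2}{k+1}\right)^{1/(2p)}$, $k\in\mathbb{N}$. Then $B_w$ is not $p$-frequently hypercyclic on $\ell^2$ (norm topology), but $B_w$ is $q$-frequently hypercyclic on $\ell^2$ for every $q\ge p+1$.
   Context: The weighted backward shift is $B_w(e_n)=w_ne_{n-1}$ for $n\ge1$, $e_0=0$. An operator $T$ on a separable topological vector space $X$ is $q$-frequently hypercyclic ($q\in\mathbb{N}$) if there is $x\in X$ such that for every nonempty open $U$ the set $\{n\in\mathbb{N}:T^nx\in U\}$ has positive $q$-lower density, where $q\text{-}\underline{\mathrm{dens}}(A)=\liminf_{N\to\infty}\frac{\mathrm{card}\{n\in A:n\le N^q\}}{N}$. *)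

theory Defs
  imports "HOL-Analysis.Analysis"
begin

definition l2 :: "(nat \<Rightarrow> real) set" where
  "l2 = {x. summable (\<lambda>n. (x n)\<^sup>2)}"

definition l2norm :: "(nat \<Rightarrow> real) \<Rightarrow> real" where
  "l2norm x = sqrt (\<Sum>n. (x n)\<^sup>2)"

definition l2_open :: "(nat \<Rightarrow> real) set \<Rightarrow> bool" where
  "l2_open U \<longleftrightarrow> U \<subseteq> l2 \<and>
     (\<forall>x\<in>U. \<exists>e>0. \<forall>y\<in>l2. l2norm (\<lambda>n. y n - x n) < e \<longrightarrow> y \<in> U)"

text \<open>Weighted backward shift: B_w(e_n) = w_n e_(n-1) for n \<ge> 1, B_w(e_0) = 0,
  i.e. (B_w x)_m = w_(m+1) x_(m+1).\<close>

definition bshift :: "(nat \<Rightarrow> real) \<Rightarrow> (nat \<Rightarrow> real) \<Rightarrow> (nat \<Rightarrow> real)" where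
  "bshift w x = (\<lambda>m. w (Suc m) * x (Suc m))"

definition q_lower_dens :: "nat \<Rightarrow> nat set \<Rightarrow> ereal" where
  "q_lower_dens q A =
     liminf (\<lambda>N::nat. ereal (real (card {n\<in>A. n \<le> N ^ q}) / real N))"

definition q_freq_hypercyclic_l2 :: "nat \<Rightarrow> ((nat \<Rightarrow> real) \<Rightarrow> (nat \<Rightarrow> real)) \<Rightarrow> bool" where
  "q_freq_hypercyclic_l2 q T \<longleftrightarrow>
     (\<exists>x\<in>l2. \<forall>U. l2_open U \<and> U \<noteq> {} \<longrightarrow> q_lower_dens q {n. (T ^^ n) x \<in> U} > 0)"

end

theory Submission
  imports Defs
begin


lemma l2_tri:
  assumes f: "summable (\<lambda>n. (f n)\<^sup>2)" and g: "summable (\<lambda>n. (g n)\<^sup>2)"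
  shows "summable (\<lambda>n. (f n + g n)\<^sup>2) \<and> l2norm (\<lambda>n. f n + g n) \<le> l2norm f + l2norm g"
proof -
  have b: "(\<Sum>i<K. (f i + g i)\<^sup>2) \<le> (l2norm f + l2norm g)\<^sup>2" for K
  proof -
    have "L2_set (\<lambda>i. f i + g i) {..<K} \<le> L2_set f {..<K} + L2_set g {..<K}"
      by (rule L2_set_triangle_ineq)
    also have "L2_set f {..<K} \<le> l2norm f"
      unfolding L2_set_def l2norm_def
      by (rule real_sqrt_le_mono, rule sum_le_suminf[OF f]) auto
    also have "L2_set g {..<K} \<le> l2norm g"
      unfolding L2_set_def l2norm_def
      by (rule real_sqrt_le_mono, rule sum_le_suminf[OF g]) auto
    finally have h: "sqrt (\<Sum>i<K. (f i + g i)\<^sup>2) \<le> l2norm f + l2norm g"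
      unfolding L2_set_def by simp
    have nn: "0 \<le> (\<Sum>i<K. (f i + g i)\<^sup>2)" by (intro sum_nonneg) simp
    have "0 \<le> sqrt (\<Sum>i<K. (f i + g i)\<^sup>2)" using nn by simp
    from power_mono[OF h this, of 2] show ?thesis
      by (simp only: real_sqrt_pow2[OF nn])
  qed
  have s: "summable (\<lambda>n. (f n + g n)\<^sup>2)"
    by (rule summableI_nonneg_bounded[OF _ b]) auto
  have "(\<Sum>n. (f n + g n)\<^sup>2) \<le> (l2norm f + l2norm g)\<^sup>2"
    by (rule suminf_le_const[OF s b])
  hence "sqrt (\<Sum>n. (f n + g n)\<^sup>2) \<le> sqrt ((l2norm f + l2norm g)\<^sup>2)"
    by (rule real_sqrt_le_mono)
  moreover have "0 \<le> l2norm f + l2norm g"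
  proof -
    have "0 \<le> (\<Sum>n. (f n)\<^sup>2)" by (rule suminf_nonneg[OF f]) simp
    moreover have "0 \<le> (\<Sum>n. (g n)\<^sup>2)" by (rule suminf_nonneg[OF g]) simp
    ultimately show ?thesis unfolding l2norm_def by simp
  qed
  ultimately show ?thesis using s unfolding l2norm_def by simp
qed

lemma l2_diff_summable:
  assumes "a \<in> l2" "b \<in> l2"
  shows "summable (\<lambda>n. (a n - b n)\<^sup>2)"
proof -
  have "summable (\<lambda>n. (- b n)\<^sup>2)" using assms by (simp add: l2_def)
  from l2_tri[OF _ this, of a] assms show ?thesis by (simp add: l2_def)
qed

lemma l2norm_tri3:
  assumes "a \<in> l2" "b \<in> l2" "c \<in> l2"
  shows "l2norm (\<lambda>n. a n - c n) \<le> l2norm (\<lambda>n. a n - b n) + l2norm (\<lambda>n. b n - c n)"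
proof -
  have "l2norm (\<lambda>n. (a n - b n) + (b n - c n)) \<le> l2norm (\<lambda>n. a n - b n) + l2norm (\<lambda>n. b n - c n)"
    using l2_tri[OF l2_diff_summable[OF assms(1,2)] l2_diff_summable[OF assms(2,3)]] by blast
  thus ?thesis by simp
qed

lemma l2norm_coord:
  assumes "summable (\<lambda>n. (f n)\<^sup>2)"
  shows "\<bar>f i\<bar> \<le> l2norm f"
proof -
  have "(\<Sum>n\<in>{i}. (f n)\<^sup>2) \<le> (\<Sum>n. (f n)\<^sup>2)"
    by (rule sum_le_suminf[OF assms]) auto
  hence "sqrt ((f i)\<^sup>2) \<le> l2norm f" unfolding l2norm_def
    by (intro real_sqrt_le_mono) simp
  thus ?thesis by (simp only: real_sqrt_abs)
qed

lemma l2_finite_support: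
  assumes "\<And>n. n \<ge> K \<Longrightarrow> f n = 0"
  shows "f \<in> l2"
proof -
  have "summable (\<lambda>n. (f (n + K))\<^sup>2)" using assms by simp
  thus ?thesis unfolding l2_def using summable_iff_shift[of "\<lambda>n. (f n)\<^sup>2" K] by simp
qed

lemma l2_approx_rat:
  assumes z: "z \<in> l2" and e: "e > 0"
  shows "\<exists>ys::rat list. l2norm (\<lambda>n. (if n < length ys then of_rat (ys ! n) else 0) - z n) < e"
proof -
  have sz: "summable (\<lambda>n. (z n)\<^sup>2)" using z by (simp add: l2_def)
  obtain K where K: "\<And>n. n \<ge> K \<Longrightarrow> norm (\<Sum>i. (z (i + n))\<^sup>2) < e\<^sup>2 / 2"
    using suminf_exist_split[OF _ sz, of "e\<^sup>2/2"] e by auto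
  define d where "d = e / (2 * (real K + 1))"
  have d: "d > 0" using e by (simp add: d_def)
  have "\<forall>i. \<exists>r::rat. z i - d < of_rat r \<and> of_rat r < z i + d"
  proof
    fix i show "\<exists>r::rat. z i - d < of_rat r \<and> of_rat r < z i + d"
      by (rule of_rat_dense) (use d in simp)
  qed
  then obtain r :: "nat \<Rightarrow> rat" where r0: "\<And>i. z i - d < of_rat (r i) \<and> of_rat (r i) < z i + d"
    by metis
  have r: "\<bar>of_rat (r i) - z i\<bar> < d" for i using r0[of i] by (simp add: abs_diff_less_iff)
  define ys where "ys = map r [0..<K]"
  define y where "y = (\<lambda>n. (if n < length ys then of_rat (ys ! n) else 0) - z n)"
  have yK: "y (n + K) = - z (n + K)" for n by (simp add: y_def ys_def)
  have ylt: "n < K \<Longrightarrow> y n = of_rat (r n) - z n" for n by (simp add: y_def ys_def)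
  have sy: "summable (\<lambda>n. (y n)\<^sup>2)"
    by (subst summable_iff_shift[symmetric, of _ K]) (use summable_iff_shift[of "\<lambda>n. (z n)\<^sup>2" K] sz in \<open>simp add: yK\<close>)
  have "(\<Sum>n. (y n)\<^sup>2) = (\<Sum>n. (y (n + K))\<^sup>2) + (\<Sum>i<K. (y i)\<^sup>2)"
    by (rule suminf_split_initial_segment[OF sy])
  also have "(\<Sum>n. (y (n + K))\<^sup>2) = (\<Sum>n. (z (n + K))\<^sup>2)" by (simp add: yK)
  also have "\<dots> < e\<^sup>2/2" using K[of K] by (simp add: suminf_nonneg sz)
  also have "(\<Sum>i<K. (y i)\<^sup>2) \<le> (\<Sum>i<K. d\<^sup>2)"
  proof (rule sum_mono)
    fix i assume "i \<in> {..<K}"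
    hence "\<bar>y i\<bar> \<le> d" using r[of i] ylt[of i] by simp
    hence "(\<bar>y i\<bar>)\<^sup>2 \<le> d\<^sup>2" by (intro power_mono) auto
    thus "(y i)\<^sup>2 \<le> d\<^sup>2" by simp
  qed
  also have "(\<Sum>i<K. d\<^sup>2) \<le> e\<^sup>2/2"
  proof -
    have "(\<Sum>i<K. d\<^sup>2) = real K * e\<^sup>2 / (4 * (real K + 1)^2)"
      by (simp add: d_def power_divide power_mult_distrib power2_eq_square algebra_simps)
    also have "\<dots> \<le> e\<^sup>2/2"
    proof -
      have "real K * e\<^sup>2 \<le> (e\<^sup>2/2) * (4 * (real K + 1)^2)"
        using e by (simp add: power2_eq_square algebra_simps mult_right_mono)
      thus ?thesis by (simp add: divide_le_eq)
    qed
    finally show ?thesis .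
  qed
  finally have "(\<Sum>n. (y n)\<^sup>2) < e\<^sup>2" by simp
  hence "l2norm y < sqrt (e\<^sup>2)" unfolding l2norm_def by (intro real_sqrt_less_mono)
  thus ?thesis using e unfolding y_def by auto
qed



locale wsetup =
  fixes p :: nat and w :: "nat \<Rightarrow> real"
  assumes p1: "p \<ge> 1"
    and wdef: "\<And>k. w k = ((real k + 2) / (real k + 1)) powr (1 / (2 * real p))"
begin

definition W :: "nat \<Rightarrow> real" where
  "W n = ((real n + 2) / 2) powr (1 / (2 * real p))"

lemma W_pos: "W n > 0" unfolding W_def by simp

lemma Wdiv: "W a / W b = ((real a + 2) / (real b + 2)) powr (1 / (2 * real p))"
proof -
  have e: "(real a + 2) / (real b + 2) = ((real a + 2) / 2) / ((real b + 2) / 2)"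
    by (simp add: field_simps)
  show ?thesis unfolding W_def by (simp only: e powr_divide)
qed

lemma w_Suc: "w (Suc m) = W (Suc m) / W m"
proof -
  have "real (Suc m) + 1 = real m + 2" by simp
  thus ?thesis using wdef[of "Suc m"] Wdiv[of "Suc m" m] by (simp add: add.commute)
qed

lemma iter: "(bshift w ^^ n) x m = W (m + n) / W m * x (m + n)"
proof (induction n arbitrary: m)
  case 0 thus ?case using W_pos[of m] by simp
next
  case (Suc n)
  have "(bshift w ^^ Suc n) x m = w (Suc m) * (bshift w ^^ n) x (Suc m)"
    by (simp add: bshift_def)
  also have "\<dots> = W (Suc m) / W m * (W (Suc m + n) / W (Suc m) * x (Suc m + n))"
    using Suc w_Suc by simp
  also have "\<dots> = W (m + Suc n) / W m * x (m + Suc n)"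
    using W_pos[of "Suc m"] by simp
  finally show ?case .
qed

lemma Wsq: "(W a / W b)\<^sup>2 = ((real a + 2) / (real b + 2)) powr (1 / real p)"
proof -
  have "(W a / W b)\<^sup>2 = ((real a + 2) / (real b + 2)) powr (1 / (2 * real p) + 1 / (2 * real p))"
    unfolding Wdiv power2_eq_square by (simp only: powr_add)
  also have "1 / (2 * real p) + 1 / (2 * real p) = 1 / real p" by simp
  finally show ?thesis .
qed

lemma w_bound: "0 \<le> w k \<and> w k \<le> 2"
proof -
  have b1: "1 \<le> (real k + 2) / (real k + 1)" by simp
  have b2: "(real k + 2) / (real k + 1) \<le> 2" by (simp add: field_simps)
  have "((real k + 2) / (real k + 1)) powr (1 / (2 * real p)) \<le> ((real k + 2) / (real k + 1)) powr 1"
    by (rule powr_mono[OF _ b1]) (use p1 in simp)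
  also have "\<dots> \<le> 2" using b1 b2 by simp
  finally show ?thesis using wdef[of k] by simp
qed

lemma bshift_l2: "x \<in> l2 \<Longrightarrow> bshift w x \<in> l2"
proof -
  assume x: "x \<in> l2"
  hence "summable (\<lambda>m. (x (m + 1))\<^sup>2)" unfolding l2_def
    using summable_iff_shift[of "\<lambda>n. (x n)\<^sup>2" 1] by simp
  hence s: "summable (\<lambda>m. 4 * (x (m + 1))\<^sup>2)" by (rule summable_mult)
  show ?thesis unfolding l2_def
  proof (simp, rule summable_comparison_test[OF _ s])
    show "\<exists>N. \<forall>n\<ge>N. norm ((bshift w x n)\<^sup>2) \<le> 4 * (x (n + 1))\<^sup>2"
    proof (intro exI allI impI)
      fix n
      have wb: "\<bar>w (Suc n)\<bar> \<le> 2" using w_bound[of "Suc n"] by simp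
      have "norm ((bshift w x n)\<^sup>2) = (\<bar>w (Suc n)\<bar> * \<bar>x (Suc n)\<bar>)\<^sup>2"
        by (simp add: bshift_def power_mult_distrib)
      also have "\<dots> \<le> (2 * \<bar>x (Suc n)\<bar>)\<^sup>2"
        by (intro power_mono mult_right_mono wb) auto
      finally show "norm ((bshift w x n)\<^sup>2) \<le> 4 * (x (n + 1))\<^sup>2"
        by (simp add: power_mult_distrib)
    qed
  qed
qed

lemma iter_l2: "x \<in> l2 \<Longrightarrow> (bshift w ^^ n) x \<in> l2"
  by (induction n) (auto intro: bshift_l2)

end


lemma pow_suc_ge: "(p::nat) \<ge> 1 \<Longrightarrow> (N + 1) ^ p \<ge> N ^ p + (1::nat)"
proof (induction p rule: dec_induct)
  case base thus ?case by simp
next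
  case (step p)
  have "(N + 1) ^ Suc p = (N + 1) * (N + 1) ^ p" by simp
  also have "\<dots> \<ge> (N + 1) * (N ^ p + 1)" using step.IH by (intro mult_left_mono) auto
  finally show ?case by (simp add: algebra_simps)
qed

lemma mod_pow2_uniq:
  assumes "(N::nat) mod 2 ^ Suc j = 2 ^ j" "N mod 2 ^ Suc j' = 2 ^ j'"
  shows "j = j'"
proof (rule ccontr)
  have gen: "False" if a: "N mod 2 ^ Suc a = 2 ^ a" and b: "N mod 2 ^ Suc b = 2 ^ b" and ab: "a < b" for a b
  proof -
    have "(2::nat) ^ Suc a dvd 2 ^ Suc b" using ab by (simp add: le_imp_power_dvd)
    hence "N mod 2 ^ Suc b mod 2 ^ Suc a = N mod 2 ^ Suc a" by (rule mod_mod_cancel)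
    hence "2 ^ b mod 2 ^ Suc a = (2::nat) ^ a" using a b by simp
    moreover have "(2::nat) ^ Suc a dvd 2 ^ b" by (rule le_imp_power_dvd) (use ab in simp)
    ultimately show False by simp
  qed
  assume "j \<noteq> j'"
  thus False using gen[OF assms] gen[OF assms(2,1)] by linarith
qed

context wsetup begin

definition q0 :: nat where "q0 = Suc p"
definition s :: real where "s = 1 / (4 * real p)"
definition ys :: "nat \<Rightarrow> rat list" where "ys j = fst (from_nat j :: rat list \<times> nat)"
definition kk :: "nat \<Rightarrow> nat" where "kk j = snd (from_nat j :: rat list \<times> nat)"
definition L :: "nat \<Rightarrow> nat" where "L j = length (ys j)"
definition Y :: "nat \<Rightarrow> nat \<Rightarrow> real" where
  "Y j i = (if i < L j then of_rat (ys j ! i) else 0)"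
definition C :: "nat \<Rightarrow> real" where "C j = (\<Sum>i<L j. (Y j i)\<^sup>2 * (real i + 2))"
definition Zc :: real where "Zc = (\<Sum>t. real (Suc t) powr (-1 - s))"
definition tp :: "nat \<Rightarrow> nat" where "tp N = (LEAST j. N mod 2 ^ Suc j = 2 ^ j)"
definition act :: "nat \<Rightarrow> bool" where
  "act N \<longleftrightarrow> 1 \<le> N \<and> L (tp N) \<le> N \<and> C (tp N) \<le> real N powr s \<and>
      2 * Zc * (real (kk (tp N)) + 1)\<^sup>2 < real N powr s"
definition blk :: "nat \<Rightarrow> nat \<Rightarrow> nat \<Rightarrow> bool" where
  "blk k N i \<longleftrightarrow> act N \<and> i < L (tp N) \<and> k = N ^ q0 + i"
definition xv :: "nat \<Rightarrow> real" where
  "xv k = (if \<exists>N i. blk k N i then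
      (case (SOME t. blk k (fst t) (snd t)) of (N, i) \<Rightarrow> Y (tp N) i * W i / W k) else 0)"

lemma s_pos: "s > 0" using p1 unfolding s_def by simp

lemma C_nonneg: "C j \<ge> 0" unfolding C_def by (intro sum_nonneg) simp

lemma Zc_summable: "summable (\<lambda>t. real (Suc t) powr (-1 - s))"
proof -
  have "summable (\<lambda>n. real n powr (-1 - s))"
    using s_pos by (subst summable_real_powr_iff) simp
  hence "summable (\<lambda>n. real (n + 1) powr (-1 - s))"
    using summable_iff_shift[of "\<lambda>n. real n powr (-1 - s)" 1] by simp
  thus ?thesis by simp
qed

lemma sum_le_Zc: "(\<Sum>t<B. real (Suc t) powr (-1 - s)) \<le> Zc"
  unfolding Zc_def by (rule sum_le_suminf[OF Zc_summable]) auto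

lemma Zc_nonneg: "Zc \<ge> 0" using sum_le_Zc[of 0] by simp

lemma tp_eq: assumes a: "N mod 2 ^ Suc j = 2 ^ j" shows "tp N = j"
  unfolding tp_def by (rule Least_equality[where P="\<lambda>j. N mod 2 ^ Suc j = 2 ^ j", OF a]) (metis a mod_pow2_uniq order_refl)

lemma gap: "(N::nat) < N' \<Longrightarrow> N ^ q0 + N < N' ^ q0"
proof -
  assume "N < N'"
  have "(N + 1) ^ q0 \<le> N' ^ q0" using \<open>N < N'\<close> by (simp add: power_mono)
  have "N ^ q0 + N = N * N ^ p + N" by (simp add: q0_def)
  also have "\<dots> < (N + 1) * (N ^ p + 1)" by (simp add: algebra_simps)
  also have "\<dots> \<le> (N + 1) * (N + 1) ^ p"
    using pow_suc_ge[OF p1, of N] by (intro mult_left_mono) auto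
  also have "\<dots> = (N + 1) ^ q0" by (simp add: q0_def)
  finally show ?thesis using \<open>(N + 1) ^ q0 \<le> N' ^ q0\<close> by linarith
qed

lemma blk_le: "blk k N i \<Longrightarrow> i < N" unfolding blk_def act_def by auto

lemma blk_unique:
  assumes "blk k N i" "blk k N' i'"
  shows "N = N' \<and> i = i'"
proof -
  have k: "k = N ^ q0 + i" "k = N' ^ q0 + i'" using assms unfolding blk_def by auto
  have "\<not> N < N'" using gap[of N N'] blk_le[OF assms(1)] k by auto
  moreover have "\<not> N' < N" using gap[of N' N] blk_le[OF assms(2)] k by auto
  ultimately show ?thesis using k by auto
qed

lemma xv_blk: "blk k N i \<Longrightarrow> xv k = Y (tp N) i * W i / W k"
proof -
  assume b: "blk k N i"
  hence ex: "\<exists>N i. blk k N i" by blast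
  have "blk k (fst (N, i)) (snd (N, i))" using b by simp
  hence "blk k (fst (SOME t. blk k (fst t) (snd t))) (snd (SOME t. blk k (fst t) (snd t)))"
    by (rule someI)
  hence "(SOME t. blk k (fst t) (snd t)) = (N, i)"
    using blk_unique[OF b] by (metis prod.collapse)
  thus ?thesis unfolding xv_def using ex by simp
qed

lemma xv_zero: assumes "\<not> (\<exists>N i. blk k N i)" shows "xv k = 0"
  unfolding xv_def by (subst if_not_P[OF assms]) simp

end


context wsetup begin

lemma ratio_bound:
  fixes a b D :: real
  assumes a: "a \<ge> 0" and D: "D \<ge> 1" and bD: "b + 2 \<ge> D"
  shows "((a + 2) / (b + 2)) powr (1 / real p) \<le> (a + 2) * D powr (- (1 / real p))"
proof -
  have e1: "1 / real p \<le> 1" using p1 by simp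
  have "(a + 2) powr (1 / real p) \<le> (a + 2) powr 1"
    by (rule powr_mono[OF e1]) (use a in simp)
  hence n: "(a + 2) powr (1 / real p) \<le> a + 2" using a by simp
  have d: "D powr (1 / real p) \<le> (b + 2) powr (1 / real p)"
    by (rule powr_mono2) (use D bD in auto)
  have Dp: "D powr (1 / real p) > 0" using D by simp
  have "((a + 2) / (b + 2)) powr (1 / real p) = (a + 2) powr (1 / real p) / (b + 2) powr (1 / real p)"
    by (rule powr_divide)
  also have "\<dots> \<le> (a + 2) / D powr (1 / real p)"
    by (rule frac_le) (use n d Dp a in auto)
  also have "\<dots> = (a + 2) * D powr (- (1 / real p))"
    by (simp add: powr_minus divide_inverse)
  finally show ?thesis .
qed

lemma block_sum:
  assumes F: "F \<subseteq> {..<I}"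
    and H: "\<And>i N' i'. i \<in> F \<Longrightarrow> blk (n + i) N' i' \<Longrightarrow> n < N' ^ q0"
  shows "(\<Sum>i\<in>F. (W (n + i) / W i * xv (n + i))\<^sup>2) \<le>
    (\<Sum>N'\<in>{N'. N' \<le> n + I \<and> act N' \<and> n < N' ^ q0}. C (tp N') * real (N' ^ q0 - n) powr (- (1 / real p)))"
proof -
  define G where "G = {N'. N' \<le> n + I \<and> act N' \<and> n < N' ^ q0}"
  define T where "T = Sigma G (\<lambda>N'. {..<L (tp N')})"
  define f where "f i = (W (n + i) / W i * xv (n + i))\<^sup>2" for i
  define g where "g t = (case t of (N', i') \<Rightarrow>
      (Y (tp N') i')\<^sup>2 * (real i' + 2) * real (N' ^ q0 - n) powr (- (1 / real p)))" for t
  define F' where "F' = {i\<in>F. xv (n + i) \<noteq> 0}"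
  have finF: "finite F" using F finite_subset by blast
  have finG: "finite G" unfolding G_def by (rule finite_subset[of _ "{..n+I}"]) auto
  have finT: "finite T" unfolding T_def using finG by auto
  have "(\<Sum>i\<in>F. f i) = (\<Sum>i\<in>F'. f i)"
    by (rule sum.mono_neutral_right[OF finF]) (auto simp: F'_def f_def)
  also have "\<dots> \<le> (\<Sum>t\<in>T. g t)"
  proof (rule sum_le_included[where i="\<lambda>t. fst t ^ q0 + snd t - n"])
    show "finite F'" using finF unfolding F'_def by auto
    show "finite T" by (rule finT)
    show "\<forall>y\<in>T. 0 \<le> g y" unfolding g_def by auto
    show "\<forall>x\<in>F'. \<exists>y\<in>T. fst y ^ q0 + snd y - n = x \<and> f x \<le> g y"
    proof
      fix i assume iF': "i \<in> F'"
      hence iF: "i \<in> F" and nz: "xv (n + i) \<noteq> 0" unfolding F'_def by auto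
      then obtain N' i' where b: "blk (n + i) N' i'" using xv_zero by blast
      have nN: "n < N' ^ q0" by (rule H[OF iF b])
      have k: "n + i = N' ^ q0 + i'" and aN: "act N'" and iL: "i' < L (tp N')"
        using b unfolding blk_def by auto
      have "1 \<le> N'" using aN unfolding act_def by simp
      hence "N' \<le> N' ^ q0" by (intro self_le_power) (auto simp: q0_def)
      moreover have "i < I" using iF F by auto
      ultimately have "N' \<le> n + I" using k by linarith
      hence yT: "(N', i') \<in> T" unfolding T_def G_def using aN nN iL by auto
      have xv: "xv (n + i) = Y (tp N') i' * W i' / W (n + i)" by (rule xv_blk[OF b])
      have eq: "W (n + i) / W i * xv (n + i) = Y (tp N') i' * (W i' / W i)"
        unfolding xv using W_pos[of "n + i"] W_pos[of i] by (simp add: field_simps)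
      hence "f i = (Y (tp N') i' * (W i' / W i))\<^sup>2" unfolding f_def by (simp only: eq)
      hence "f i = (Y (tp N') i')\<^sup>2 * (W i' / W i)\<^sup>2" by (simp only: power_mult_distrib)
      also have "(W i' / W i)\<^sup>2 = ((real i' + 2) / (real i + 2)) powr (1 / real p)" by (rule Wsq)
      also have "\<dots> \<le> (real i' + 2) * real (N' ^ q0 - n) powr (- (1 / real p))"
      proof (rule ratio_bound)
        have "n + 1 \<le> N' ^ q0" using nN by simp
        hence r1: "real n + 1 \<le> real N' ^ q0" by (metis of_nat_1 of_nat_add of_nat_le_iff of_nat_power)
        have r2: "real n + real i = real N' ^ q0 + real i'" using arg_cong[OF k, of real] by simp
        have e: "real (N' ^ q0 - n) = real N' ^ q0 - real n" using nN by (simp add: of_nat_diff)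
        show "1 \<le> real (N' ^ q0 - n)" unfolding e using r1 by linarith
        show "real (N' ^ q0 - n) \<le> real i + 2" unfolding e using r2 by linarith
      qed simp
      finally have "f i \<le> g (N', i')" unfolding g_def
        by (simp add: mult.assoc mult_left_mono)
      moreover have "fst (N', i') ^ q0 + snd (N', i') - n = i" using k by simp
      ultimately show "\<exists>y\<in>T. fst y ^ q0 + snd y - n = i \<and> f i \<le> g y" using yT by blast
    qed
  qed
  also have "(\<Sum>t\<in>T. g t) = (\<Sum>N'\<in>G. \<Sum>i'<L (tp N').
      (Y (tp N') i')\<^sup>2 * (real i' + 2) * real (N' ^ q0 - n) powr (- (1 / real p)))"
    unfolding T_def g_def by (rule sum.Sigma[symmetric]) (use finG in auto)
  also have "\<dots> = (\<Sum>N'\<in>G. C (tp N') * real (N' ^ q0 - n) powr (- (1 / real p)))"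
    unfolding C_def by (simp add: sum_distrib_right)
  finally show ?thesis unfolding f_def G_def .
qed

end


lemma sum_shift_le:
  fixes h :: "nat \<Rightarrow> real"
  assumes G: "G \<subseteq> {N<..B}" and h: "\<And>x. 0 \<le> h x"
  shows "(\<Sum>N'\<in>G. h (N' - N)) \<le> (\<Sum>t<B. h (Suc t))"
proof -
  have "(\<Sum>N'\<in>G. h (N' - N)) \<le> (\<Sum>N'\<in>{N<..N+B}. h (N' - N))"
    by (rule sum_mono2) (use G h in auto)
  also have "\<dots> = (\<Sum>t<B. h (Suc t))"
    by (rule sum.reindex_bij_witness[where j="\<lambda>N'. N' - N - 1" and i="\<lambda>t. N + Suc t"]) (auto simp: Suc_diff_Suc)
  finally show ?thesis .
qed

context wsetup begin

lemma keyineq: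
  assumes N1: "1 \<le> N" and NN: "N < N'"
  shows "real N' powr s * real (N' ^ q0 - N ^ q0) powr (- (1 / real p))
      \<le> 2 * real N powr (- s) * real (N' - N) powr (-1 - s)"
proof -
  define a where "a = real N"
  define b where "b = real N'"
  define t where "t = real (N' - N)"
  define d where "d = real (N' ^ q0 - N ^ q0)"
  have a1: "a \<ge> 1" using N1 unfolding a_def by simp
  have t1: "t \<ge> 1" using NN unfolding t_def by simp
  have bat: "b = a + t" using NN unfolding a_def b_def t_def by simp
  have sp: "s > 0" "s \<le> 1" using s_pos p1 unfolding s_def by auto
  have ps: "1 / real p = 4 * s" using p1 unfolding s_def by simp
  have pp: "real p \<ge> 1" using p1 by simp
  have "N * N ^ p \<le> N * N' ^ p" using NN by (simp add: power_mono)
  hence "N' * N' ^ p - N * N' ^ p \<le> N' * N' ^ p - N * N ^ p" by (rule diff_le_mono2)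
  moreover have "(N' - N) * N' ^ p = N' * N' ^ p - N * N' ^ p" by (simp add: diff_mult_distrib)
  ultimately have "(N' - N) * N' ^ p \<le> N' ^ q0 - N ^ q0" unfolding q0_def by simp
  hence d1: "t * b ^ p \<le> d" unfolding t_def b_def d_def
    by (metis of_nat_le_iff of_nat_mult of_nat_power)
  have "b ^ p = b powr (1/2) * b powr (real p - 1/2)"
    using a1 bat t1 by (simp add: powr_add[symmetric] powr_realpow)
  also have "\<dots> \<ge> a powr (1/2) * t powr (real p - 1/2)"
    by (intro mult_mono powr_mono2) (use a1 t1 bat pp in auto)
  finally have b2: "a powr (1/2) * t powr (real p - 1/2) \<le> b ^ p" .
  have "t * (a powr (1/2) * t powr (real p - 1/2)) = a powr (1/2) * t powr (real p + 1/2)"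
    using t1 by (simp add: powr_add algebra_simps powr_mult_base)
  moreover have "t * (a powr (1/2) * t powr (real p - 1/2)) \<le> t * b ^ p"
    using b2 t1 by simp
  ultimately have m1: "a powr (1/2) * t powr (real p + 1/2) \<le> d" using d1 by linarith
  have mpos: "a powr (1/2) * t powr (real p + 1/2) > 0" using a1 t1 by simp
  have "d powr (- (1 / real p)) \<le> (a powr (1/2) * t powr (real p + 1/2)) powr (- (1 / real p))"
    by (rule powr_mono2') (use mpos m1 in auto)
  also have "\<dots> = a powr (- (1 / (2 * real p))) * t powr (- ((real p + 1/2) / real p))"
    using a1 t1 by (simp add: powr_mult powr_powr)
  also have "(real p + 1/2) / real p = 1 + 2 * s" using pp unfolding s_def by (simp add: field_simps)
  also have "1 / (2 * real p) = 2 * s" unfolding s_def by simp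
  finally have D: "d powr (- (1 / real p)) \<le> a powr (- (2 * s)) * t powr (- (1 + 2 * s))" .
  have "0 \<le> (a - 1) * (t - 1)" using a1 t1 by simp
  hence e1: "0 \<le> a * t - a - t + 1" by (simp add: algebra_simps)
  have "1 * 1 \<le> a * t" by (rule mult_mono) (use a1 t1 in auto)
  hence "b \<le> 2 * a * t" using e1 bat by linarith
  hence "b powr s \<le> (2 * a * t) powr s" by (intro powr_mono2) (use sp a1 t1 bat in auto)
  also have "\<dots> = 2 powr s * a powr s * t powr s" by (simp add: powr_mult)
  also have "2 powr s \<le> 2 powr 1" by (rule powr_mono) (use sp in auto)
  hence "2 powr s * a powr s * t powr s \<le> 2 * a powr s * t powr s"
    by (intro mult_right_mono) auto
  finally have B: "b powr s \<le> 2 * a powr s * t powr s" .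
  have "b powr s * d powr (- (1 / real p)) \<le> (2 * a powr s * t powr s) * (a powr (- (2 * s)) * t powr (- (1 + 2 * s)))"
    by (intro mult_mono B D) auto
  also have "\<dots> = 2 * (a powr s * a powr (- (2 * s))) * (t powr s * t powr (- (1 + 2 * s)))"
    by (simp add: algebra_simps)
  also have "\<dots> = 2 * a powr (- s) * t powr (-1 - s)"
    by (simp add: powr_add[symmetric] add.commute)
  finally show ?thesis unfolding a_def b_def t_def d_def .
qed

end


context wsetup begin

lemma act_ge1: "act N \<Longrightarrow> 1 \<le> N" unfolding act_def by simp

lemma xv_psum: "(\<Sum>k<I. (xv k)\<^sup>2) \<le> Zc"
proof -
  define G where "G = {N'. N' \<le> 0 + I \<and> act N' \<and> 0 < N' ^ q0}"
  have H: "\<And>i N' i'. i \<in> {..<I} \<Longrightarrow> blk (0 + i) N' i' \<Longrightarrow> 0 < N' ^ q0"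
    unfolding blk_def by (auto dest: act_ge1)
  have "(\<Sum>k<I. (xv k)\<^sup>2) = (\<Sum>i\<in>{..<I}. (W (0 + i) / W i * xv (0 + i))\<^sup>2)"
  proof -
    have w0: "W i \<noteq> 0" for i using W_pos[of i] by simp
    show ?thesis by (simp add: w0)
  qed
  also have "\<dots> \<le> (\<Sum>N'\<in>G. C (tp N') * real (N' ^ q0 - 0) powr (- (1 / real p)))"
    unfolding G_def by (rule block_sum[OF _ H]) auto
  also have "\<dots> \<le> (\<Sum>N'\<in>G. real (N' - 0) powr (-1 - s))"
  proof (rule sum_mono)
    fix N' assume "N' \<in> G"
    hence aN: "act N'" unfolding G_def by simp
    hence N1: "real N' \<ge> 1" using act_ge1 by simp
    have Cb: "C (tp N') \<le> real N' powr s" using aN unfolding act_def by simp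
    have ps: "1 / real p = 4 * s" using p1 unfolding s_def by simp
    have "real (N' ^ q0 - 0) powr (- (1 / real p)) = (real N' powr real q0) powr (- (1 / real p))"
      using N1 by (simp add: powr_realpow)
    also have "\<dots> = real N' powr (- (real q0 / real p))" by (simp add: powr_powr)
    also have "real q0 / real p = 1 + 4 * s" using p1 unfolding q0_def s_def by (simp add: field_simps)
    finally have e: "real (N' ^ q0 - 0) powr (- (1 / real p)) = real N' powr (- (1 + 4 * s))" .
    have "C (tp N') * real (N' ^ q0 - 0) powr (- (1 / real p)) \<le> real N' powr s * real N' powr (- (1 + 4 * s))"
      unfolding e by (rule mult_right_mono[OF Cb]) simp
    also have "\<dots> = real N' powr (- 1 - 3 * s)"
    proof -
      have ex: "- 1 - 3 * s = s + (- (1 + 4 * s))" by simp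
      show ?thesis unfolding ex by (simp only: powr_add)
    qed
    also have "\<dots> \<le> real N' powr (- 1 - s)" by (rule powr_mono) (use s_pos N1 in auto)
    finally show "C (tp N') * real (N' ^ q0 - 0) powr (- (1 / real p)) \<le> real (N' - 0) powr (-1 - s)"
      by simp
  qed
  also have "\<dots> \<le> (\<Sum>t<I. real (Suc t) powr (-1 - s))"
    by (rule sum_shift_le[where h="\<lambda>x. real x powr (-1 - s)"]) (auto simp: G_def act_def)
  also have "\<dots> \<le> Zc" by (rule sum_le_Zc)
  finally show ?thesis .
qed

lemma xv_l2: "xv \<in> l2"
  unfolding l2_def by (simp, rule summableI_nonneg_bounded[OF _ xv_psum]) simp

lemma Y_l2: "Y j \<in> l2"
  by (rule l2_finite_support[of "L j"]) (simp add: Y_def)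

lemma tail:
  assumes aN: "act N"
  shows "l2norm (\<lambda>i. (bshift w ^^ (N ^ q0)) xv i - Y (tp N) i) < 1 / (real (kk (tp N)) + 1)"
proof -
  define j where "j = tp N"
  define n where "n = N ^ q0"
  define D where "D i = ((bshift w ^^ n) xv i - Y j i)\<^sup>2" for i
  have N1: "1 \<le> N" using act_ge1[OF aN] .
  have sD: "summable D" unfolding D_def
    by (rule l2_diff_summable[OF iter_l2[OF xv_l2] Y_l2])
  have Dlow: "D i = 0" if "i < L j" for i
  proof -
    have "blk (n + i) N i" unfolding blk_def n_def j_def using aN that j_def by auto
    hence "xv (n + i) = Y j i * W i / W (n + i)" using xv_blk j_def by simp
    hence "(bshift w ^^ n) xv i = Y j i" unfolding iter using W_pos[of i] W_pos[of "n + i"]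
      by (simp add: add.commute)
    thus ?thesis unfolding D_def by simp
  qed
  have Dhigh: "D i = (W (n + i) / W i * xv (n + i))\<^sup>2" if "L j \<le> i" for i
    unfolding D_def iter using that by (simp add: Y_def add.commute)
  define G where "G I = {N'. N' \<le> n + I \<and> act N' \<and> n < N' ^ q0}" for I
  have H: "n < N' ^ q0" if "i \<in> {i. i < I \<and> L j \<le> i}" "blk (n + i) N' i'" for I i N' i'
  proof -
    have k: "n + i = N' ^ q0 + i'" and i'L: "i' < L (tp N')" and i'N: "i' < N'"
      using that(2) unfolding blk_def act_def by auto
    have Lj: "L j \<le> i" using that(1) by simp
    consider "N' = N" | "N' < N" | "N < N'" by linarith
    thus ?thesis
    proof cases
      case 1 thus ?thesis using k i'L Lj unfolding n_def j_def by simp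
    next
      case 2
      have "N' ^ q0 + N' < N ^ q0" by (rule gap[OF 2])
      thus ?thesis using k i'N unfolding n_def by linarith
    next
      case 3 thus ?thesis unfolding n_def by (intro power_strict_mono) (auto simp: q0_def)
    qed
  qed
  have bound: "(\<Sum>i<I. D i) \<le> 2 * real N powr (- s) * Zc" for I
  proof -
    have "(\<Sum>i<I. D i) = (\<Sum>i\<in>{i. i < I \<and> L j \<le> i}. D i)"
      by (rule sum.mono_neutral_right) (auto, metis Dlow not_le)
    also have "\<dots> = (\<Sum>i\<in>{i. i < I \<and> L j \<le> i}. (W (n + i) / W i * xv (n + i))\<^sup>2)"
      by (rule sum.cong) (auto simp: Dhigh)
    also have "\<dots> \<le> (\<Sum>N'\<in>G I. C (tp N') * real (N' ^ q0 - n) powr (- (1 / real p)))"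
      unfolding G_def by (rule block_sum[OF _ H]) auto
    also have "\<dots> \<le> (\<Sum>N'\<in>G I. 2 * real N powr (- s) * real (N' - N) powr (-1 - s))"
    proof (rule sum_mono)
      fix N' assume "N' \<in> G I"
      hence aN': "act N'" and nN: "n < N' ^ q0" unfolding G_def by auto
      have NN: "N < N'" using nN unfolding n_def
        by (metis not_less_iff_gr_or_eq power_strict_mono zero_le q0_def zero_less_Suc)
      have Cb: "C (tp N') \<le> real N' powr s" using aN' unfolding act_def by simp
      have "C (tp N') * real (N' ^ q0 - n) powr (- (1 / real p))
          \<le> real N' powr s * real (N' ^ q0 - N ^ q0) powr (- (1 / real p))"
        unfolding n_def by (rule mult_right_mono[OF Cb]) simp
      also have "\<dots> \<le> 2 * real N powr (- s) * real (N' - N) powr (-1 - s)"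
        by (rule keyineq[OF N1 NN])
      finally show "C (tp N') * real (N' ^ q0 - n) powr (- (1 / real p))
          \<le> 2 * real N powr (- s) * real (N' - N) powr (-1 - s)" .
    qed
    also have "\<dots> = 2 * real N powr (- s) * (\<Sum>N'\<in>G I. real (N' - N) powr (-1 - s))"
      by (simp add: sum_distrib_left)
    also have "(\<Sum>N'\<in>G I. real (N' - N) powr (-1 - s)) \<le> (\<Sum>t<n + I. real (Suc t) powr (-1 - s))"
    proof (rule sum_shift_le[where h="\<lambda>x. real x powr (-1 - s)"])
      show "G I \<subseteq> {N<..n + I}"
      proof
        fix N' assume "N' \<in> G I"
        hence "N' \<le> n + I" and nN: "n < N' ^ q0" unfolding G_def by auto
        moreover have "N < N'" using nN unfolding n_def
          by (metis not_less_iff_gr_or_eq power_strict_mono zero_le q0_def zero_less_Suc)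
        ultimately show "N' \<in> {N<..n + I}" by simp
      qed
    qed simp
    also have "\<dots> \<le> Zc" by (rule sum_le_Zc)
    finally show ?thesis by (simp add: mult_left_mono)
  qed
  have "suminf D \<le> 2 * real N powr (- s) * Zc" by (rule suminf_le_const[OF sD bound])
  also have "\<dots> < 1 / (real (kk j) + 1)\<^sup>2"
  proof -
    have Np: "real N powr s > 0" using N1 by simp
    have c: "2 * Zc * (real (kk j) + 1)\<^sup>2 < real N powr s" using aN unfolding act_def j_def by simp
    have "2 * real N powr (- s) * Zc = 2 * Zc / real N powr s" by (simp add: powr_minus divide_inverse)
    also have "\<dots> < 1 / (real (kk j) + 1)\<^sup>2"
      using c Np by (simp add: divide_less_eq field_simps)
    finally show ?thesis .
  qed
  finally have "sqrt (suminf D) < sqrt (1 / (real (kk j) + 1)\<^sup>2)" by (rule real_sqrt_less_mono)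
  hence "sqrt (suminf D) < 1 / (real (kk j) + 1)" by (simp add: real_sqrt_divide)
  thus ?thesis unfolding l2norm_def D_def n_def j_def by simp
qed

end


lemma count_mod:
  assumes m: "0 < (m::nat)" and h: "h < m"
  shows "M div m - R \<le> card {N. R \<le> N \<and> N \<le> M \<and> N mod m = h}"
proof -
  have sub: "(\<lambda>r. m * r + h) ` {R..<M div m} \<subseteq> {N. R \<le> N \<and> N \<le> M \<and> N mod m = h}"
  proof
    fix x assume "x \<in> (\<lambda>r. m * r + h) ` {R..<M div m}"
    then obtain r where r: "R \<le> r" "r < M div m" and x: "x = m * r + h" by auto
    have "r \<le> m * r" using m by simp
    hence "R \<le> m * r" using r by linarith
    moreover have a1: "m * r + h < m * (r + 1)" using h by simp
    have a2: "m * (r + 1) \<le> m * (M div m)" using r by (intro mult_le_mono2) simp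
    have a3: "m * (M div m) + M mod m = M" by (rule mult_div_mod_eq)
    have "m * r + h \<le> M" using a1 a2 a3 by linarith
    moreover have "(m * r + h) mod m = h" using h by simp
    ultimately show "x \<in> {N. R \<le> N \<and> N \<le> M \<and> N mod m = h}" unfolding x by auto
  qed
  have inj: "inj_on (\<lambda>r. m * r + h) {R..<M div m}" using m by (auto simp: inj_on_def)
  have "M div m - R = card ((\<lambda>r. m * r + h) ` {R..<M div m})"
    by (simp add: card_image[OF inj])
  also have "\<dots> \<le> card {N. R \<le> N \<and> N \<le> M \<and> N mod m = h}"
    by (rule card_mono[OF _ sub]) simp
  finally show ?thesis .
qed

lemma count_ratio:
  assumes m: "0 < (m::nat)" and M: "2 * m * (R + 1) \<le> M"
  shows "1 / (2 * real m) \<le> real (M div m - R) / real M"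
proof -
  have "M = m * (M div m) + M mod m" by simp
  moreover have "M mod m < m" using m by simp
  ultimately have "M < m * (M div m) + m" by linarith
  hence "M \<le> 2 * m * (M div m - R)" using M by (simp add: algebra_simps diff_mult_distrib2)
  moreover define D where "D = M div m - R"
  ultimately have "real M \<le> 2 * real m * real D" by (metis of_nat_le_iff of_nat_mult of_nat_numeral)
  moreover have "real M > 0" using M m by simp
  ultimately have "1 / (2 * real m) \<le> real D / real M" using m by (simp add: field_simps)
  thus ?thesis unfolding D_def .
qed

lemma dens_pos:
  assumes c: "c > 0" and b: "\<And>M. M \<ge> Mlo \<Longrightarrow> c \<le> real (card {n\<in>A. n \<le> M ^ q}) / real M"
  shows "q_lower_dens q A > 0"
proof -
  have "ereal c \<le> q_lower_dens q A"
    unfolding q_lower_dens_def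
  proof (subst le_Liminf_iff, intro allI impI)
    fix y assume "y < ereal c"
    show "\<forall>\<^sub>F x in sequentially. y < ereal (real (card {n \<in> A. n \<le> x ^ q}) / real x)"
      unfolding eventually_sequentially
      using b \<open>y < ereal c\<close> by (meson ereal_less_eq(3) order_less_le_trans)
  qed
  thus ?thesis using c by (meson ereal_less(2) order_less_le_trans)
qed

lemma powr_unbounded:
  assumes "(s::real) > 0"
  shows "\<exists>R. \<forall>N\<ge>R. c < real N powr s"
proof -
  define c' where "c' = max c 1 + 1"
  define R where "R = nat \<lceil>c' powr (1 / s)\<rceil>"
  have "c < real N powr s" if "N \<ge> R" for N
  proof -
    have h1: "c' powr (1 / s) \<le> real N" using that unfolding R_def by linarith
    have "(c' powr (1 / s)) powr s \<le> real N powr s" by (rule powr_mono2) (use assms h1 in auto)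
    moreover have "(c' powr (1 / s)) powr s = c'" unfolding c'_def using assms by (simp add: powr_powr)
    ultimately show ?thesis unfolding c'_def by linarith
  qed
  thus ?thesis by blast
qed

context wsetup begin

lemma eventually_good: "\<exists>R. \<forall>N\<ge>R. 1 \<le> N \<and> L j \<le> N \<and> C j \<le> real N powr s \<and>
      2 * Zc * (real (kk j) + 1)\<^sup>2 < real N powr s"
proof -
  obtain R1 where R1: "\<forall>N\<ge>R1. C j < real N powr s" using powr_unbounded[OF s_pos] by blast
  obtain R2 where R2: "\<forall>N\<ge>R2. 2 * Zc * (real (kk j) + 1)\<^sup>2 < real N powr s"
    using powr_unbounded[OF s_pos] by blast
  show ?thesis
    by (rule exI[of _ "R1 + R2 + L j + 1"]) (use R1 R2 in \<open>auto intro: less_imp_le\<close>)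
qed

theorem positive: "q \<ge> p + 1 \<Longrightarrow> q_freq_hypercyclic_l2 q (bshift w)"
proof -
  assume q: "q \<ge> p + 1"
  show ?thesis unfolding q_freq_hypercyclic_l2_def
  proof (intro bexI[OF _ xv_l2] allI impI)
    fix U assume U: "l2_open U \<and> U \<noteq> {}"
    then obtain z where zU: "z \<in> U" by blast
    have zl2: "z \<in> l2" using U zU unfolding l2_open_def by blast
    obtain e where e: "e > 0" and eU: "\<And>y. y \<in> l2 \<Longrightarrow> l2norm (\<lambda>n. y n - z n) < e \<Longrightarrow> y \<in> U"
      using U zU unfolding l2_open_def by blast
    obtain yl :: "rat list" where yl: "l2norm (\<lambda>n. (if n < length yl then of_rat (yl ! n) else 0) - z n) < e / 2"
      using l2_approx_rat[OF zl2, of "e/2"] e by auto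
    obtain k where k: "inverse (real (Suc k)) < e / 2" using reals_Archimedean[of "e/2"] e by auto
    define j where "j = to_nat (yl, k)"
    have fj: "from_nat j = (yl, k)" unfolding j_def by simp
    have kkj: "kk j = k" unfolding kk_def fj by simp
    have Yj: "Y j = (\<lambda>n. if n < length yl then of_rat (yl ! n) else 0)"
      unfolding Y_def L_def ys_def fj by auto
    have inU: "(bshift w ^^ (N ^ q0)) xv \<in> U" if aN: "act N" and tN: "tp N = j" for N
    proof (rule eU)
      show v: "(bshift w ^^ (N ^ q0)) xv \<in> l2" by (rule iter_l2[OF xv_l2])
      have "l2norm (\<lambda>n. (bshift w ^^ (N ^ q0)) xv n - z n)
          \<le> l2norm (\<lambda>n. (bshift w ^^ (N ^ q0)) xv n - Y j n) + l2norm (\<lambda>n. Y j n - z n)"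
        by (rule l2norm_tri3[OF v Y_l2 zl2])
      also have "l2norm (\<lambda>n. (bshift w ^^ (N ^ q0)) xv n - Y j n) < 1 / (real k + 1)"
        using tail[OF aN] tN kkj by simp
      also have "l2norm (\<lambda>n. Y j n - z n) < e / 2" using yl Yj by simp
      finally show "l2norm (\<lambda>n. (bshift w ^^ (N ^ q0)) xv n - z n) < e"
        using k by (simp add: inverse_eq_divide add.commute)
    qed
    obtain R where R: "\<forall>N\<ge>R. 1 \<le> N \<and> L j \<le> N \<and> C j \<le> real N powr s \<and>
      2 * Zc * (real (kk j) + 1)\<^sup>2 < real N powr s" using eventually_good by blast
    define m :: nat where "m = 2 ^ Suc j"
    have m0: "0 < m" unfolding m_def by simp
    have hm: "2 ^ j < m" unfolding m_def by simp
    define A where "A = {n. (bshift w ^^ n) xv \<in> U}"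
    have cnt: "real (M div m - R) / real M \<le> real (card {n\<in>A. n \<le> M ^ q}) / real M" for M
    proof -
      let ?S = "{N. R \<le> N \<and> N \<le> M \<and> N mod m = 2 ^ j}"
      have sub: "(\<lambda>N. N ^ q0) ` ?S \<subseteq> {n\<in>A. n \<le> M ^ q}"
      proof
        fix x assume "x \<in> (\<lambda>N. N ^ q0) ` ?S"
        then obtain N where N: "R \<le> N" "N \<le> M" "N mod m = 2 ^ j" and x: "x = N ^ q0" by auto
        have tN: "tp N = j" using N(3) unfolding m_def by (rule tp_eq)
        have aN: "act N" unfolding act_def tN using R N(1) by blast
        have "x \<in> A" unfolding A_def x using inU[OF aN tN] by simp
        moreover have "N ^ q0 \<le> M ^ q0" using N(2) by (simp add: power_mono)
        moreover have "M ^ q0 \<le> M ^ q" if "1 \<le> M" using that q unfolding q0_def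
          by (intro power_increasing) auto
        moreover have "1 \<le> N" using R N(1) by blast
        ultimately show "x \<in> {n\<in>A. n \<le> M ^ q}" unfolding x using N(2) by auto
      qed
      have q0p: "0 < q0" by (simp add: q0_def)
      have inj: "inj_on (\<lambda>N. N ^ q0) ?S"
        unfolding inj_on_def by (metis power_eq_iff_eq_base zero_le q0p)
      have "M div m - R \<le> card ?S" by (rule count_mod[OF m0 hm])
      also have "card ?S = card ((\<lambda>N. N ^ q0) ` ?S)" by (simp add: card_image[OF inj])
      also have "\<dots> \<le> card {n\<in>A. n \<le> M ^ q}" by (rule card_mono[OF _ sub]) simp
      finally show ?thesis by (simp add: divide_right_mono)
    qed
    show "0 < q_lower_dens q {n. (bshift w ^^ n) xv \<in> U}"
      unfolding A_def[symmetric]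
    proof (rule dens_pos[where Mlo="2 * m * (R + 1)"])
      show "0 < 1 / (2 * real m)" using m0 by simp
      fix M assume "2 * m * (R + 1) \<le> M"
      from count_ratio[OF m0 this] cnt[of M]
      show "1 / (2 * real m) \<le> real (card {n \<in> A. n \<le> M ^ q}) / real M" by linarith
    qed
  qed
qed

end


lemma harmonic_shift_not_summable: "\<not> summable (\<lambda>k. c / real (Suc k))" if "c \<noteq> 0" for c :: real
proof
  assume "summable (\<lambda>k. c / real (Suc k))"
  hence "summable (\<lambda>k. inverse c * (c / real (Suc k)))" by (rule summable_mult)
  hence "summable (\<lambda>k. inverse (real (k + 1)))" using that by (simp add: field_simps)
  hence "summable (\<lambda>k. inverse (real k))"
    using summable_iff_shift[of "\<lambda>k. inverse (real k)" 1] by simp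
  thus False using not_summable_harmonic by blast
qed

context wsetup begin

definition Ub :: "(nat \<Rightarrow> real) set" where "Ub = {v \<in> l2. \<bar>v 0 - 1\<bar> < 1/2}"

lemma Ub_open: "l2_open Ub"
  unfolding l2_open_def
proof (intro conjI ballI)
  show "Ub \<subseteq> l2" unfolding Ub_def by auto
  fix v assume v: "v \<in> Ub"
  show "\<exists>e>0. \<forall>y\<in>l2. l2norm (\<lambda>n. y n - v n) < e \<longrightarrow> y \<in> Ub"
  proof (intro exI[of _ "1/2 - \<bar>v 0 - 1\<bar>"] conjI ballI impI)
    show "0 < 1/2 - \<bar>v 0 - 1\<bar>" using v unfolding Ub_def by simp
    fix y assume y: "y \<in> l2" and d: "l2norm (\<lambda>n. y n - v n) < 1/2 - \<bar>v 0 - 1\<bar>"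
    have vl: "v \<in> l2" using v unfolding Ub_def by simp
    have "\<bar>y 0 - v 0\<bar> \<le> l2norm (\<lambda>n. y n - v n)"
      using l2norm_coord[OF l2_diff_summable[OF y vl], of 0] by simp
    hence "\<bar>y 0 - 1\<bar> < 1/2" using d by linarith
    thus "y \<in> Ub" unfolding Ub_def using y by simp
  qed
qed

lemma Ub_ne: "Ub \<noteq> {}"
proof -
  have "(\<lambda>n. if n = 0 then 1 else 0) \<in> l2" by (rule l2_finite_support[of 1]) simp
  hence "(\<lambda>n. if n = 0 then 1 else 0) \<in> Ub" unfolding Ub_def by simp
  thus ?thesis by blast
qed

lemma lowb:
  assumes A: "(bshift w ^^ n) x \<in> Ub" and nM: "n \<le> M ^ p" and M1: "1 \<le> M"
  shows "1 / (12 * real M) \<le> (x n)\<^sup>2"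
proof -
  have "\<bar>W n / W 0 * x n - 1\<bar> < 1/2" using A unfolding Ub_def iter by simp
  hence h: "1/2 < \<bar>W n / W 0 * x n\<bar>" by linarith
  have hh: "(1/2)\<^sup>2 < (\<bar>W n / W 0 * x n\<bar>)\<^sup>2" by (rule power_strict_mono[OF h]) auto
  have e1: "(\<bar>W n / W 0 * x n\<bar>)\<^sup>2 = (W n / W 0)\<^sup>2 * (x n)\<^sup>2" by (simp only: power2_abs power_mult_distrib)
  have e2: "(1/2::real)\<^sup>2 = 1/4" by (simp add: power2_eq_square)
  have h2: "1/4 < (W n / W 0)\<^sup>2 * (x n)\<^sup>2" using hh e1 e2 by linarith
  have "(W n / W 0)\<^sup>2 = ((real n + 2) / 2) powr (1 / real p)" using Wsq[of n 0] by simp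
  also have "\<dots> \<le> (real n + 2) powr (1 / real p)" by (rule powr_mono2) auto
  also have "\<dots> \<le> ((3 * real M) ^ p) powr (1 / real p)"
  proof (rule powr_mono2)
    have "real n \<le> real M ^ p" using nM by (metis of_nat_le_iff of_nat_power)
    moreover have "1 \<le> real M ^ p" using M1 by simp
    moreover have "real M ^ p * 3 \<le> (3 * real M) ^ p"
    proof -
      have "(3::real) \<le> 3 ^ p" using p1 by (metis power_one_right power_increasing le_numeral_extra(2) numeral_le_one_iff semiring_norm(68) one_le_numeral)
      hence "real M ^ p * 3 \<le> real M ^ p * 3 ^ p" by (intro mult_left_mono) auto
      thus ?thesis by (simp add: power_mult_distrib mult.commute)
    qed
    ultimately show "real n + 2 \<le> (3 * real M) ^ p" by linarith
  qed auto
  also have "\<dots> = 3 * real M"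
  proof -
    have X: "0 < 3 * real M" using M1 by simp
    have "((3 * real M) ^ p) powr (1 / real p) = ((3 * real M) powr real p) powr (1 / real p)"
      by (subst powr_realpow[OF X]) rule
    also have "\<dots> = (3 * real M) powr (real p * (1 / real p))" by (rule powr_powr)
    also have "real p * (1 / real p) = 1" using p1 by simp
    finally show ?thesis using X by simp
  qed
  finally have a: "(W n / W 0)\<^sup>2 \<le> 3 * real M" .
  have "1/4 < 3 * real M * (x n)\<^sup>2" using h2 a by (smt (verit) mult_right_mono zero_le_power2)
  thus ?thesis using M1 by (simp add: field_simps)
qed

theorem negative: "\<not> q_freq_hypercyclic_l2 p (bshift w)"
proof
  assume "q_freq_hypercyclic_l2 p (bshift w)"
  then obtain x where xl2: "x \<in> l2" and hx: "\<And>U. l2_open U \<and> U \<noteq> {} \<Longrightarrow> q_lower_dens p {n. (bshift w ^^ n) x \<in> U} > 0"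
    unfolding q_freq_hypercyclic_l2_def by blast
  define A where "A = {n. (bshift w ^^ n) x \<in> Ub}"
  have "0 < q_lower_dens p A" unfolding A_def using hx Ub_open Ub_ne by blast
  then obtain z where z0: "0 < ereal z" and zl: "ereal z < q_lower_dens p A"
    using ereal_dense2 by blast
  have "\<forall>\<^sub>F M in sequentially. ereal z < ereal (real (card {n\<in>A. n \<le> M ^ p}) / real M)"
    using less_LiminfD[OF zl[unfolded q_lower_dens_def]] by simp
  then obtain M0 where M0: "\<And>M. M \<ge> M0 \<Longrightarrow> z < real (card {n\<in>A. n \<le> M ^ p}) / real M"
    unfolding eventually_sequentially by auto
  have zp: "z > 0" using z0 by simp
  have Mbig: "z * real M < real (card {n\<in>A. n \<le> M ^ p})" if "M \<ge> M0" "M \<ge> 1" for M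
    using M0[OF that(1)] that(2) by (simp add: field_simps)
  have infA: "infinite A"
  proof
    assume fA: "finite A"
    obtain M where M: "real (card A) / z < real M" using reals_Archimedean2 by blast
    define M' where "M' = max M (max M0 1)"
    have "z * real M' < real (card {n\<in>A. n \<le> M' ^ p})" by (rule Mbig) (auto simp: M'_def)
    also have "card {n\<in>A. n \<le> M' ^ p} \<le> card A" by (rule card_mono[OF fA]) auto
    finally have "z * real M' < real (card A)" by simp
    moreover have "real (card A) < z * real M" using M zp by (simp add: field_simps)
    moreover have "z * real M \<le> z * real M'" using zp by (intro mult_left_mono) (auto simp: M'_def)
    ultimately show False by simp
  qed
  define a where "a = enumerate A"
  define Mk where "Mk k = M0 + nat \<lceil>real k / z\<rceil> + 1" for k
  define Dc where "Dc = real M0 + 1 / z + 2"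
  have ak: "a k \<le> Mk k ^ p" for k
  proof (rule ccontr)
    assume "\<not> a k \<le> Mk k ^ p"
    hence lt: "Mk k ^ p < a k" by simp
    have "{n\<in>A. n \<le> Mk k ^ p} \<subseteq> a ` {..<k}"
    proof
      fix n assume n: "n \<in> {n\<in>A. n \<le> Mk k ^ p}"
      then obtain i where i: "a i = n" using enumerate_Ex[OF infA] unfolding a_def by blast
      have "a i < a k" using i n lt by simp
      hence "i < k" using infA unfolding a_def by simp
      thus "n \<in> a ` {..<k}" using i by blast
    qed
    hence "card {n\<in>A. n \<le> Mk k ^ p} \<le> card (a ` {..<k})" by (rule card_mono[rotated]) simp
    also have "\<dots> \<le> k" using card_image_le[of "{..<k}" a] by simp
    finally have c1: "card {n\<in>A. n \<le> Mk k ^ p} \<le> k" .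
    have "z * real (Mk k) < real (card {n\<in>A. n \<le> Mk k ^ p})" by (rule Mbig) (auto simp: Mk_def)
    moreover have "real k \<le> z * real (Mk k)"
    proof -
      have "real k / z \<le> real (Mk k)" unfolding Mk_def by linarith
      thus ?thesis using zp by (simp add: field_simps)
    qed
    ultimately show False using c1 by linarith
  qed
  have Mk_le: "real (Mk k) \<le> Dc * real (Suc k)" for k
  proof -
    have "0 \<le> real k / z" using zp by simp
    hence c0: "0 \<le> \<lceil>real k / z\<rceil>" by simp
    have r1: "real (nat \<lceil>real k / z\<rceil>) = real_of_int \<lceil>real k / z\<rceil>" using c0 by simp
    have r2: "real_of_int \<lceil>real k / z\<rceil> \<le> real k / z + 1" by (rule of_int_ceiling_le_add_one)
    have r3: "real (Mk k) = real M0 + real (nat \<lceil>real k / z\<rceil>) + 1" unfolding Mk_def by simp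
    have "real (Mk k) \<le> real M0 + real k / z + 2" using r1 r2 r3 by linarith
    also have "\<dots> \<le> Dc * real (Suc k)" unfolding Dc_def using zp
      by (simp add: algebra_simps mult_left_mono add_mono)
    finally show ?thesis .
  qed
  have Dc0: "Dc > 0"
  proof -
    have "0 < 1 / z" using zp by simp
    moreover have "0 \<le> real M0" by simp
    ultimately show ?thesis unfolding Dc_def by linarith
  qed
  have lb: "1 / (12 * Dc) / real (Suc k) \<le> (x (a k))\<^sup>2" for k
  proof -
    have aA: "a k \<in> A" using enumerate_in_set[OF infA] unfolding a_def by blast
    have M1: "1 \<le> Mk k" unfolding Mk_def by simp
    have "1 / (12 * real (Mk k)) \<le> (x (a k))\<^sup>2"
      by (rule lowb[OF _ ak M1]) (use aA in \<open>simp add: A_def\<close>)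
    moreover have "1 / (12 * Dc) / real (Suc k) \<le> 1 / (12 * real (Mk k))"
      using Mk_le[of k] Dc0 M1 by (simp add: field_simps)
    ultimately show ?thesis by linarith
  qed
  have sx: "summable (\<lambda>n. (x n)\<^sup>2)" using xl2 unfolding l2_def by simp
  have inj: "inj a" unfolding a_def using infA by (simp add: inj_enumerate)
  have "summable (\<lambda>k. (x (a k))\<^sup>2)"
  proof (rule summableI_nonneg_bounded)
    fix K
    have "(\<Sum>k<K. (x (a k))\<^sup>2) = (\<Sum>n\<in>a ` {..<K}. (x n)\<^sup>2)"
      by (rule sum.reindex[symmetric, unfolded comp_def]) (use inj in \<open>auto intro: inj_on_subset\<close>)
    also have "\<dots> \<le> (\<Sum>n. (x n)\<^sup>2)" by (rule sum_le_suminf[OF sx]) auto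
    finally show "(\<Sum>k<K. (x (a k))\<^sup>2) \<le> (\<Sum>n. (x n)\<^sup>2)" .
  qed simp
  hence "summable (\<lambda>k. 1 / (12 * Dc) / real (Suc k))"
  proof (rule summable_comparison_test'[where N=0])
    fix n :: nat
    have "norm (1 / (12 * Dc) / real (Suc n)) = 1 / (12 * Dc) / real (Suc n)" using Dc0 by simp
    thus "norm (1 / (12 * Dc) / real (Suc n)) \<le> (x (a n))\<^sup>2" using lb[of n] by simp
  qed
  thus False using harmonic_shift_not_summable[of "1 / (12 * Dc)"] Dc0 by simp
qed

end

theorem mainTheorem7:
  fixes p :: nat and w :: "nat \<Rightarrow> real"
  assumes "p \<ge> 1"
    and "\<And>k. w k = ((real k + 2) / (real k + 1)) powr (1 / (2 * real p))"
  shows "\<not> q_freq_hypercyclic_l2 p (bshift w) \<and>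
         (\<forall>q. q \<ge> p + 1 \<longrightarrow> q_freq_hypercyclic_l2 q (bshift w))"
proof -
  interpret wsetup p w by unfold_locales (use assms in auto)
  show ?thesis using negative positive by blast
qed

end
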